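(* The class of right normal bands with intersection and update is a proper quasivariety (it is not closed under homomorphic images, hence not axiomatisable by identities), and so is the class of 1-stacks with intersection and update.
   Context: A right normal band is a semigroup $(A,\circ)$ with $x\circ x=x$ and $(x\circ y)\circ z=(y\circ x)\circ z$. A right normal band with intersection $(A,\circ,\cap)$: right normal band $(A,\circ)$, semilattice $(A,\cap)$, $(x\cap y)\circ x=x\cap y$, $x\circ(y\cap z)=(x\circ y)\cap z$. A right normal band with intersection and update $(A,\circ,\cap,\diamond)$: a right normal band with intersection satisfying $s=(s\diamond t)\circ s$, $s\diamond t=s\diamond(s\diamond t)$, $s\circ t=t\circ(s\diamond t)$, and the quasi-identity $(x\cap(x\diamond y))\circ a=(x\cap(x\diamond y))\circ b\ \&\ y\circ a=y\circ b\Rightarrow x\circ a=x\circ b$. A 1-stack with intersection and update $(A,\cdot,\circ,\cap,\diamond)$: $(A,\circ,\cap,\diamond)$ a right normal band with intersection and update, $\cdot$ associative (juxtaposition), $a\circ(bc)=(a\circ b)c$, $a(b\circ c)=ab\circ ac$, $s(t\cap u)=st\cap su$, $s(t\diamond u)=st\diamond su$. *)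

theory Defs
  imports Main
begin

(* Algebras are given by a carrier set A together with operations on the ambient type.
   c = \<circ> (composition), i = \<inter> (intersection), u = \<diamond> (update), m = juxtaposition. *)

definition closed2 :: "'a set \<Rightarrow> ('a \<Rightarrow> 'a \<Rightarrow> 'a) \<Rightarrow> bool" where
  "closed2 A f \<longleftrightarrow> (\<forall>x\<in>A. \<forall>y\<in>A. f x y \<in> A)"

definition right_normal_band :: "'a set \<Rightarrow> ('a \<Rightarrow> 'a \<Rightarrow> 'a) \<Rightarrow> bool" where
  "right_normal_band A c \<longleftrightarrow> closed2 A c \<and>
     (\<forall>x\<in>A. \<forall>y\<in>A. \<forall>z\<in>A. c (c x y) z = c x (c y z)) \<and>
     (\<forall>x\<in>A. c x x = x) \<and>
     (\<forall>x\<in>A. \<forall>y\<in>A. \<forall>z\<in>A. c (c x y) z = c (c y x) z)"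

definition semilattice_on :: "'a set \<Rightarrow> ('a \<Rightarrow> 'a \<Rightarrow> 'a) \<Rightarrow> bool" where
  "semilattice_on A i \<longleftrightarrow> closed2 A i \<and>
     (\<forall>x\<in>A. \<forall>y\<in>A. \<forall>z\<in>A. i (i x y) z = i x (i y z)) \<and>
     (\<forall>x\<in>A. \<forall>y\<in>A. i x y = i y x) \<and>
     (\<forall>x\<in>A. i x x = x)"

definition rnb_intersection :: "'a set \<Rightarrow> ('a \<Rightarrow> 'a \<Rightarrow> 'a) \<Rightarrow> ('a \<Rightarrow> 'a \<Rightarrow> 'a) \<Rightarrow> bool" where
  "rnb_intersection A c i \<longleftrightarrow> right_normal_band A c \<and> semilattice_on A i \<and>
     (\<forall>x\<in>A. \<forall>y\<in>A. c (i x y) x = i x y) \<and>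
     (\<forall>x\<in>A. \<forall>y\<in>A. \<forall>z\<in>A. c x (i y z) = i (c x y) z)"

definition rnb_intersection_update ::
  "'a set \<Rightarrow> ('a \<Rightarrow> 'a \<Rightarrow> 'a) \<Rightarrow> ('a \<Rightarrow> 'a \<Rightarrow> 'a) \<Rightarrow> ('a \<Rightarrow> 'a \<Rightarrow> 'a) \<Rightarrow> bool" where
  "rnb_intersection_update A c i u \<longleftrightarrow> rnb_intersection A c i \<and> closed2 A u \<and>
     (\<forall>s\<in>A. \<forall>t\<in>A. s = c (u s t) s) \<and>
     (\<forall>s\<in>A. \<forall>t\<in>A. u s t = u s (u s t)) \<and>
     (\<forall>s\<in>A. \<forall>t\<in>A. c s t = c t (u s t)) \<and>
     (\<forall>x\<in>A. \<forall>y\<in>A. \<forall>a\<in>A. \<forall>b\<in>A.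
        c (i x (u x y)) a = c (i x (u x y)) b \<and> c y a = c y b \<longrightarrow> c x a = c x b)"

definition one_stack_iu ::
  "'a set \<Rightarrow> ('a \<Rightarrow> 'a \<Rightarrow> 'a) \<Rightarrow> ('a \<Rightarrow> 'a \<Rightarrow> 'a) \<Rightarrow> ('a \<Rightarrow> 'a \<Rightarrow> 'a) \<Rightarrow> ('a \<Rightarrow> 'a \<Rightarrow> 'a) \<Rightarrow> bool" where
  "one_stack_iu A m c i u \<longleftrightarrow> rnb_intersection_update A c i u \<and> closed2 A m \<and>
     (\<forall>x\<in>A. \<forall>y\<in>A. \<forall>z\<in>A. m (m x y) z = m x (m y z)) \<and>
     (\<forall>a\<in>A. \<forall>b\<in>A. \<forall>d\<in>A. c a (m b d) = m (c a b) d) \<and>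
     (\<forall>a\<in>A. \<forall>b\<in>A. \<forall>d\<in>A. m a (c b d) = c (m a b) (m a d)) \<and>
     (\<forall>s\<in>A. \<forall>t\<in>A. \<forall>v\<in>A. m s (i t v) = i (m s t) (m s v)) \<and>
     (\<forall>s\<in>A. \<forall>t\<in>A. \<forall>v\<in>A. m s (u t v) = u (m s t) (m s v))"

definition hom2 :: "('a \<Rightarrow> 'b) \<Rightarrow> 'a set \<Rightarrow> ('a \<Rightarrow> 'a \<Rightarrow> 'a) \<Rightarrow> ('b \<Rightarrow> 'b \<Rightarrow> 'b) \<Rightarrow> bool" where
  "hom2 h A f g \<longleftrightarrow> (\<forall>x\<in>A. \<forall>y\<in>A. h (f x y) = g (h x) (h y))"

end

theory Submission
  imports Defs
begin

definition cT :: "nat \<Rightarrow> nat \<Rightarrow> nat" where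
  "cT x y = [[0,0,2,2,4,4],[0,1,2,3,4,5],[0,0,2,2,4,4],[0,1,2,3,4,5],[4,4,4,4,4,4],[4,5,4,5,4,5]] ! x ! y"
definition iT :: "nat \<Rightarrow> nat \<Rightarrow> nat" where
  "iT x y = [[0,0,4,4,4,4],[0,1,4,5,4,5],[4,4,2,2,4,4],[4,5,2,3,4,5],[4,4,4,4,4,4],[4,5,4,5,4,5]] ! x ! y"
definition uT :: "nat \<Rightarrow> nat \<Rightarrow> nat" where
  "uT x y = [[0,0,2,2,0,0],[1,1,3,3,1,1],[0,0,2,2,2,2],[1,1,3,3,3,3],[4,4,4,4,4,4],[5,5,5,5,5,5]] ! x ! y"
definition hT :: "nat \<Rightarrow> nat" where "hT x = (if x = 5 then 4 else x)"

definition AT :: "nat set" where "AT = {0,1,2,3,4,5}"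
definition BT :: "nat set" where "BT = {0,1,2,3,4}"

lemma ballA: "(\<forall>x\<in>AT. P x) \<longleftrightarrow> P 0 \<and> P 1 \<and> P 2 \<and> P 3 \<and> P 4 \<and> P 5"
  by (simp add: AT_def)
lemma ballB: "(\<forall>x\<in>BT. P x) \<longleftrightarrow> P 0 \<and> P 1 \<and> P 2 \<and> P 3 \<and> P 4"
  by (simp add: BT_def)

lemma rnbA: "rnb_intersection_update AT cT iT uT"
  unfolding rnb_intersection_update_def rnb_intersection_def right_normal_band_def
    semilattice_on_def closed2_def
  by (simp only: ballA) (simp add: cT_def iT_def uT_def AT_def)

lemma stackA: "one_stack_iu AT (\<lambda>x y. x) cT iT uT"
  unfolding one_stack_iu_def closed2_def
  using rnbA by (simp only: ballA) (simp add: cT_def iT_def uT_def AT_def)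

lemma imgB: "hT ` AT = BT"
  by (auto simp: hT_def AT_def BT_def)

lemma homs:
  "hom2 hT AT cT (\<lambda>x y. hT (cT x y))"
  "hom2 hT AT iT (\<lambda>x y. hT (iT x y))"
  "hom2 hT AT uT (\<lambda>x y. hT (uT x y))"
  "hom2 hT AT (\<lambda>x y. x) (\<lambda>x y. x)"
  unfolding hom2_def
  by (simp only: ballA; simp add: cT_def iT_def uT_def hT_def)+

lemma closedB:
  "closed2 BT (\<lambda>x y. hT (cT x y))"
  "closed2 BT (\<lambda>x y. hT (iT x y))"
  "closed2 BT (\<lambda>x y. hT (uT x y))"
  "closed2 BT (\<lambda>x y. x)"
  unfolding closed2_def
  by (simp only: ballB; simp add: cT_def iT_def uT_def hT_def BT_def)+

lemma notB: "\<not> rnb_intersection_update BT (\<lambda>x y. hT (cT x y)) (\<lambda>x y. hT (iT x y)) (\<lambda>x y. hT (uT x y))"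
proof
  assume "rnb_intersection_update BT (\<lambda>x y. hT (cT x y)) (\<lambda>x y. hT (iT x y)) (\<lambda>x y. hT (uT x y))"
  hence q: "\<forall>x\<in>BT. \<forall>y\<in>BT. \<forall>a\<in>BT. \<forall>b\<in>BT.
        hT (cT (hT (iT x (hT (uT x y)))) a) = hT (cT (hT (iT x (hT (uT x y)))) b) \<and> hT (cT y a) = hT (cT y b) \<longrightarrow> hT (cT x a) = hT (cT x b)"
    unfolding rnb_intersection_update_def by blast
  have "3 \<in> BT" "0 \<in> BT" "1 \<in> BT" by (auto simp: BT_def)
  with q have "hT (cT (hT (iT 3 (hT (uT 3 0)))) 1) = hT (cT (hT (iT 3 (hT (uT 3 0)))) 0) \<and> hT (cT 0 1) = hT (cT 0 0) \<longrightarrow> hT (cT 3 1) = hT (cT 3 0)"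
    by blast
  thus False by (simp add: cT_def iT_def uT_def hT_def)
qed

theorem proposition5p10:
  shows "(\<exists>(A::nat set) c i u (B::nat set) c' i' u' (h::nat \<Rightarrow> nat).
            rnb_intersection_update A c i u \<and>
            h ` A = B \<and> closed2 B c' \<and> closed2 B i' \<and> closed2 B u' \<and>
            hom2 h A c c' \<and> hom2 h A i i' \<and> hom2 h A u u' \<and>
            \<not> rnb_intersection_update B c' i' u')
       \<and> (\<exists>(A::nat set) m c i u (B::nat set) m' c' i' u' (h::nat \<Rightarrow> nat).
            one_stack_iu A m c i u \<and>
            h ` A = B \<and> closed2 B m' \<and> closed2 B c' \<and> closed2 B i' \<and> closed2 B u' \<and>
            hom2 h A m m' \<and> hom2 h A c c' \<and> hom2 h A i i' \<and> hom2 h A u u' \<and>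
            \<not> one_stack_iu B m' c' i' u')"
proof
  show "\<exists>(A::nat set) c i u (B::nat set) c' i' u' (h::nat \<Rightarrow> nat).
            rnb_intersection_update A c i u \<and>
            h ` A = B \<and> closed2 B c' \<and> closed2 B i' \<and> closed2 B u' \<and>
            hom2 h A c c' \<and> hom2 h A i i' \<and> hom2 h A u u' \<and>
            \<not> rnb_intersection_update B c' i' u'"
    using rnbA imgB closedB homs notB by blast
  show "\<exists>(A::nat set) m c i u (B::nat set) m' c' i' u' (h::nat \<Rightarrow> nat).
            one_stack_iu A m c i u \<and>
            h ` A = B \<and> closed2 B m' \<and> closed2 B c' \<and> closed2 B i' \<and> closed2 B u' \<and>
            hom2 h A m m' \<and> hom2 h A c c' \<and> hom2 h A i i' \<and> hom2 h A u u' \<and>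
            \<not> one_stack_iu B m' c' i' u'"
  proof (intro exI conjI)
    show "one_stack_iu AT (\<lambda>x y. x) cT iT uT" by (rule stackA)
    show "\<not> one_stack_iu BT (\<lambda>x y. x) (\<lambda>x y. hT (cT x y)) (\<lambda>x y. hT (iT x y)) (\<lambda>x y. hT (uT x y))"
      using notB unfolding one_stack_iu_def by blast
  qed (rule imgB closedB homs)+
qed

end
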